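(* Let $n\ge 2$, $0<p<1$, and let $\{V^{(h)}\}_{h\ge 0}$ be a homogeneous Markov chain on $\mathcal V=\{v_1,\dots,v_n\}$ with transition matrix $Q$ given by $$Q_{ij}=\Pr[V^{(h)}=v_j\mid V^{(h-1)}=v_i]=\frac{1-p}{1-p^n}\,p^{\,(j-i-1)\bmod n},\qquad 1\le i,j\le n,$$ (so row $i$ is $\frac{1-p}{1-p^n}(\dots,p^{n-1},1,p,p^2,\dots)$ with the entry $1$ in column $i+1$ cyclically). Let $\pi^{(h)}$ be the probability vector of $V^{(h)}$ (with arbitrary initial distribution $\pi^{(0)}$), and let $\pi^{(\infty)}=(1/n,\dots,1/n)^\top$. Then $\pi^{(h)}\to\pi^{(\infty)}$ as $h\to\infty$, and for all $h\ge 0$, $$\|\pi^{(h)}-\pi^{(\infty)}\|_1\le \sqrt n\,|\lambda_1|^h,\qquad\text{where } |\lambda_1|=\frac{1-p}{\sqrt{1+p^2-2p\cos\frac{2\pi}{n}}}.$$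
   Context: $\|\cdot\|_1$ is the $\ell_1$ norm. This chain describes the sequence of non-skipped nodes on a fixed logical ring where each node is independently skipped with probability $p$. *)

theory Defs
  imports Complex_Main
begin

text \<open>States v_1..v_n are represented by indices 0..n-1 (0-based).
  Transition matrix Q i j = (1-p)/(1-p^n) * p^((j - i - 1) mod n).\<close>
definition skipQ :: "nat \<Rightarrow> real \<Rightarrow> nat \<Rightarrow> nat \<Rightarrow> real" where
  "skipQ n p i j = (1 - p) / (1 - p ^ n) * p ^ nat ((int j - int i - 1) mod int n)"

fun dist_at :: "nat \<Rightarrow> real \<Rightarrow> (nat \<Rightarrow> real) \<Rightarrow> nat \<Rightarrow> nat \<Rightarrow> real" where
  "dist_at n p pi0 0 j = pi0 j"
| "dist_at n p pi0 (Suc h) j = (\<Sum>i<n. dist_at n p pi0 h i * skipQ n p i j)"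

end

theory Submission imports Defs "HOL-Analysis.Analysis" begin


lemma skipQ_rec:
  assumes n: "n \<ge> 2" and p: "0 < p" "p < 1" and i: "i < n" and j: "j < n"
  shows "skipQ n p i ((j+1) mod n) - p * skipQ n p i j = (if i = j then 1 - p else 0)"
proof -
  have pn: "p ^ n < 1" using p n by (simp add: power_less_one_iff)
  have pn': "1 - p ^ n \<noteq> 0" using pn by simp
  define C where "C = (1 - p) / (1 - p ^ n)"
  have key: "(int ((j+1) mod n) - int i - 1) mod int n = (int j - int i) mod int n"
  proof (cases "j + 1 < n")
    case True
    then have "(j+1) mod n = j+1" by simp
    then show ?thesis by simp
  next
    case False
    then have jn: "j + 1 = n" using j by simp
    then have "(j+1) mod n = 0" by simp
    then have "int ((j+1) mod n) - int i - 1 = (int j - int i) + (-1) * int n" using jn by simp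
    then show ?thesis by (simp only: mod_mult_self1)
  qed
  have sk: "skipQ n p i k = C * p ^ nat ((int k - int i - 1) mod int n)" for k
    unfolding skipQ_def C_def by (rule refl)
  show ?thesis
  proof (cases "i = j")
    case True
    have e1: "nat ((int ((j+1) mod n) - int i - 1) mod int n) = 0"
    proof -
      have "(int ((j+1) mod n) - int i - 1) mod int n = 0" unfolding key using True by simp
      then show ?thesis by simp
    qed
    have e2: "nat ((int j - int i - 1) mod int n) = n - 1"
    proof -
      have "(int j - int i - 1) mod int n = int n - 1"
        using True n zmod_minus1[of "int n"] by simp
      then show ?thesis by simp
    qed
    have pp: "p * p ^ (n - 1) = p ^ n" using n by (cases n) auto
    have "skipQ n p i ((j+1) mod n) - p * skipQ n p i j = C - C * (p * p ^ (n - 1))"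
      unfolding sk e1 e2 by (simp add: algebra_simps)
    also have "\<dots> = C * (1 - p ^ n)" unfolding pp by (simp add: algebra_simps)
    also have "\<dots> = 1 - p" unfolding C_def using pn' by simp
    finally show ?thesis using True by simp
  next
    case False
    define e' where "e' = (int j - int i) mod int n"
    have e'0: "e' \<ge> 0" "e' < int n" using n unfolding e'_def by simp_all
    have e'1: "e' \<noteq> 0"
    proof
      assume "e' = 0"
      then have "int n dvd (int j - int i)" unfolding e'_def by (simp add: mod_eq_0_iff_dvd)
      moreover have "int j - int i \<noteq> 0" using False by simp
      ultimately have "\<bar>int n\<bar> \<le> \<bar>int j - int i\<bar>" by (rule dvd_imp_le_int[rotated])
      then show False using i j by linarith
    qed
    have "(int j - int i - 1) mod int n = (e' - 1) mod int n"
      unfolding e'_def by (simp add: mod_diff_left_eq)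
    also have "\<dots> = e' - 1" using e'0 e'1 by (intro mod_pos_pos_trivial) simp_all
    finally have b: "nat ((int j - int i - 1) mod int n) = nat (e' - 1)" by simp
    have a: "nat ((int ((j+1) mod n) - int i - 1) mod int n) = Suc (nat (e' - 1))"
      unfolding key e'_def[symmetric] using e'0 e'1 by simp
    show ?thesis unfolding sk a b using False by simp
  qed
qed

lemma dist_rec:
  assumes n: "n \<ge> 2" and p: "0 < p" "p < 1" and j: "j < n"
  shows "dist_at n p pi0 (Suc h) ((j+1) mod n) - p * dist_at n p pi0 (Suc h) j
         = (1 - p) * dist_at n p pi0 h j"
proof -
  have "dist_at n p pi0 (Suc h) ((j+1) mod n) - p * dist_at n p pi0 (Suc h) j
     = (\<Sum>i<n. dist_at n p pi0 h i * (skipQ n p i ((j+1) mod n) - p * skipQ n p i j))"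
    by (simp add: sum_distrib_left sum_subtractf algebra_simps)
  also have "\<dots> = (\<Sum>i<n. dist_at n p pi0 h i * (if i = j then 1 - p else 0))"
    by (rule sum.cong) (use skipQ_rec[OF n p _ j] in auto)
  also have "\<dots> = (1 - p) * dist_at n p pi0 h j" using j by (simp add: if_distrib cong: if_cong)
  finally show ?thesis .
qed


definition om :: "nat \<Rightarrow> complex" where "om n = cis (2 * pi / real n)"
definition DFT :: "nat \<Rightarrow> (nat \<Rightarrow> complex) \<Rightarrow> nat \<Rightarrow> complex" where
  "DFT n f k = (\<Sum>j<n. f j * om n ^ (j * k))"

lemma om_pow: "om n ^ m = cis (2 * pi * real m / real n)"
  unfolding om_def unfolding Complex.DeMoivre by (simp add: field_simps)

lemma om_pow_n: "n > 0 \<Longrightarrow> om n ^ n = 1"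
  unfolding om_pow by simp

lemma om_pow_mod: "n > 0 \<Longrightarrow> om n ^ (m mod n) = om n ^ m"
proof -
  assume n: "n > 0"
  have "om n ^ m = om n ^ (n * (m div n) + m mod n)" by (simp only: mult_div_mod_eq)
  also have "\<dots> = om n ^ (m mod n)" by (simp only: power_add power_mult om_pow_n[OF n] power_one mult_1)
  finally show ?thesis by (rule sym)
qed

lemma cmod_om_pow [simp]: "cmod (om n ^ m) = 1"
  unfolding om_pow by simp

lemma sum_shift_mod:
  fixes n :: nat
  assumes "n > 0"
  shows "(\<Sum>j<n. g ((j+1) mod n)) = (\<Sum>l<n. (g l :: 'a::comm_monoid_add))"
proof -
  obtain m where m: "n = Suc m" using assms by (cases n) auto
  have "(\<Sum>j<Suc m. g ((j+1) mod Suc m)) = (\<Sum>j<m. g ((j+1) mod Suc m)) + g 0"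
    by (simp add: sum.lessThan_Suc)
  also have "(\<Sum>j<m. g ((j+1) mod Suc m)) = (\<Sum>j<m. g (Suc j))"
    by (rule sum.cong) auto
  also have "(\<Sum>j<m. g (Suc j)) + g 0 = (\<Sum>l<Suc m. g l)"
    by (subst sum.lessThan_Suc_shift) (rule add.commute)
  finally show ?thesis using m by simp
qed

lemma DFT_shift:
  assumes "n > 0"
  shows "om n ^ k * (\<Sum>j<n. f ((j+1) mod n) * om n ^ (j * k)) = DFT n f k"
proof -
  have "om n ^ k * (\<Sum>j<n. f ((j+1) mod n) * om n ^ (j * k))
      = (\<Sum>j<n. f ((j+1) mod n) * om n ^ (((j+1) mod n) * k))"
    unfolding sum_distrib_left
  proof (rule sum.cong)
    fix j assume "j \<in> {..<n}"
    have "om n ^ (((j+1) mod n) * k) = (om n ^ ((j+1) mod n)) ^ k" by (simp add: power_mult)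
    also have "\<dots> = (om n ^ (j+1)) ^ k" using om_pow_mod[OF assms] by simp
    also have "\<dots> = om n ^ k * om n ^ (j * k)" by (simp add: power_mult[symmetric] power_add algebra_simps)
    finally show "om n ^ k * (f ((j + 1) mod n) * om n ^ (j * k)) = f ((j + 1) mod n) * om n ^ ((j + 1) mod n * k)"
      by simp
  qed simp
  also have "\<dots> = DFT n f k"
    unfolding DFT_def by (rule sum_shift_mod[OF assms, where g = "\<lambda>l. f l * om n ^ (l * k)"])
  finally show ?thesis .
qed

lemma orth:
  assumes j: "j < n" and l: "l < n"
  shows "(\<Sum>k<n. om n ^ (j * k) * cnj (om n ^ (l * k))) = (if j = l then of_nat n else 0)"
proof -
  define z where "z = cis (2 * pi * (real j - real l) / real n)"
  have t: "om n ^ (j * k) * cnj (om n ^ (l * k)) = z ^ k" for k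
    unfolding z_def unfolding Complex.DeMoivre om_pow unfolding cis_cnj cis_mult
    by (rule arg_cong[where f=cis]) (simp add: diff_divide_distrib[symmetric] algebra_simps)
  have zn: "z ^ n = 1"
  proof -
    have "z ^ n = cis (2 * pi * (real j - real l))" using j unfolding z_def Complex.DeMoivre by simp
    also have "\<dots> = cis (2 * pi * of_int (int j - int l))" by simp
    also have "\<dots> = 1" by (rule cis_multiple_2pi) simp
    finally show ?thesis .
  qed
  show ?thesis
  proof (cases "j = l")
    case True
    then have "z = 1" unfolding z_def by simp
    then show ?thesis using True t by simp
  next
    case False
    have "z \<noteq> 1"
    proof
      assume "z = 1"
      then have "cos (2 * pi * (real j - real l) / real n) = 1" unfolding z_def
        by (metis Re_complex_of_real cis.sel(1) one_complex.sel(1))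
      then obtain m :: int where m: "2 * pi * (real j - real l) / real n = real_of_int m * 2 * pi"
        using cos_one_2pi_int by blast
      have rn: "real n > 0" using j by simp
      have "2 * pi * (real j - real l) = 2 * pi * (real_of_int m * real n)"
        using m rn by (simp add: field_simps)
      hence "real j - real l = real_of_int m * real n" using pi_gt_zero by simp
      hence "real_of_int (int j - int l) = real_of_int (m * int n)" by simp
      hence "int j - int l = m * int n" using of_int_eq_iff by blast
      moreover have "\<bar>int j - int l\<bar> < int n" using j l by auto
      ultimately have "\<bar>m\<bar> * int n < 1 * int n" by (simp add: abs_mult)
      hence "\<bar>m\<bar> < 1" by (rule mult_right_less_imp_less) simp
      hence "m = 0" by simp
      then show False using \<open>int j - int l = m * int n\<close> False by simp
    qed
    then show ?thesis using False t zn by (simp add: sum_gp_strict)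
  qed
qed

lemma parseval:
  "(\<Sum>k<n. (cmod (DFT n f k))\<^sup>2) = real n * (\<Sum>j<n. (cmod (f j))\<^sup>2)"
proof -
  have dd: "DFT n f k * cnj (DFT n f k) = (\<Sum>j<n. \<Sum>l<n. f j * cnj (f l) * (om n ^ (j * k) * cnj (om n ^ (l * k))))" for k
    unfolding DFT_def cnj_sum complex_cnj_mult sum_product by (simp only: mult_ac)
  have "complex_of_real (\<Sum>k<n. (cmod (DFT n f k))\<^sup>2) = (\<Sum>k<n. DFT n f k * cnj (DFT n f k))"
    by (simp only: of_real_sum complex_norm_square)
  also have "\<dots> = (\<Sum>k<n. \<Sum>j<n. \<Sum>l<n. f j * cnj (f l) * (om n ^ (j * k) * cnj (om n ^ (l * k))))"
    by (simp only: dd)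
  also have "\<dots> = (\<Sum>j<n. \<Sum>k<n. \<Sum>l<n. f j * cnj (f l) * (om n ^ (j * k) * cnj (om n ^ (l * k))))"
    by (rule sum.swap)
  also have "\<dots> = (\<Sum>j<n. \<Sum>l<n. \<Sum>k<n. f j * cnj (f l) * (om n ^ (j * k) * cnj (om n ^ (l * k))))"
    by (intro sum.cong refl sum.swap)
  also have "\<dots> = (\<Sum>j<n. \<Sum>l<n. f j * cnj (f l) * (\<Sum>k<n. om n ^ (j * k) * cnj (om n ^ (l * k))))"
    by (simp only: sum_distrib_left)
  also have "\<dots> = (\<Sum>j<n. \<Sum>l<n. f j * cnj (f l) * (if j = l then of_nat n else 0))"
  proof (intro sum.cong refl)
    fix j l assume jl: "j \<in> {..<n}" "l \<in> {..<n}"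
    have "(\<Sum>k<n. om n ^ (j * k) * cnj (om n ^ (l * k))) = (if j = l then of_nat n else 0)"
      using jl by (intro orth) auto
    then show "f j * cnj (f l) * (\<Sum>k<n. om n ^ (j * k) * cnj (om n ^ (l * k))) = f j * cnj (f l) * (if j = l then of_nat n else 0)"
      by (simp only:)
  qed
  also have "\<dots> = (\<Sum>j<n. f j * cnj (f j) * of_nat n)"
    by (intro sum.cong refl) (simp add: if_distrib cong: if_cong)
  also have "\<dots> = (\<Sum>j<n. complex_of_real (real n * (cmod (f j))\<^sup>2))"
    by (intro sum.cong refl) (simp add: complex_norm_square[symmetric])
  also have "\<dots> = complex_of_real (real n * (\<Sum>j<n. (cmod (f j))\<^sup>2))"
    by (simp only: of_real_sum sum_distrib_left)
  finally show ?thesis using of_real_eq_iff by blast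
qed

lemma cos_le:
  assumes n: "n \<ge> 2" and k: "0 < k" "k < n"
  shows "cos (2 * pi * real k / real n) \<le> cos (2 * pi / real n)"
proof -
  have gen: "cos (2 * pi * real k' / real n) \<le> cos (2 * pi / real n)" if "0 < k'" "2 * k' \<le> n" for k'
  proof (rule cos_monotone_0_pi_le)
    show "0 \<le> 2 * pi / real n" by simp
    show "2 * pi / real n \<le> 2 * pi * real k' / real n" using that n
      by (simp add: divide_right_mono)
    have "real (2 * k') \<le> real n" using that by linarith
    then have "2 * real k' \<le> real n" by simp
    then show "2 * pi * real k' / real n \<le> pi" using n
      by (simp add: field_simps mult_left_mono)
  qed
  show ?thesis
  proof (cases "2 * k \<le> n")
    case True then show ?thesis using gen k by blast
  next
    case False
    define k' where "k' = n - k"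
    have k': "0 < k'" "2 * k' \<le> n" using k False by (auto simp: k'_def)
    have "2 * pi * real k / real n = 2 * pi - 2 * pi * real k' / real n"
      using k n by (simp add: k'_def of_nat_diff field_simps)
    then have "cos (2 * pi * real k / real n) = cos (2 * pi * real k' / real n)"
      by (simp add: cos_diff)
    then show ?thesis using gen[OF k'] by simp
  qed
qed

lemma alg: "(1 - p * c)\<^sup>2 + (p * s)\<^sup>2 = 1 + p\<^sup>2 * (s\<^sup>2 + c\<^sup>2) - 2 * p * (c::real)"
  by (simp add: power2_eq_square algebra_simps)

lemma norm_one_minus:
  "(cmod (1 - complex_of_real p * om n ^ k))\<^sup>2 = 1 + p\<^sup>2 - 2 * p * cos (2 * pi * real k / real n)"
proof -
  have "(cmod (1 - complex_of_real p * om n ^ k))\<^sup>2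
      = (1 - p * cos (2 * pi * real k / real n))\<^sup>2 + (p * sin (2 * pi * real k / real n))\<^sup>2"
    unfolding cmod_power2 om_pow by simp
  also have "\<dots> = 1 + p\<^sup>2 * ((sin (2 * pi * real k / real n))\<^sup>2 + (cos (2 * pi * real k / real n))\<^sup>2)
       - 2 * p * cos (2 * pi * real k / real n)"
    by (rule alg)
  also have "\<dots> = 1 + p\<^sup>2 - 2 * p * cos (2 * pi * real k / real n)" by simp
  finally show ?thesis .
qed


lemma alg2:
  assumes "a - p * b = (1 - p) * (c::real)"
  shows "(a - d) - p * (b - d) = (1 - p) * (c - d)"
proof -
  have "(a - d) - p * (b - d) = (a - p * b) - d + p * d" by (simp add: algebra_simps)
  also have "\<dots> = (1 - p) * c - d + p * d" using assms by simp
  also have "\<dots> = (1 - p) * (c - d)" by (simp add: algebra_simps)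
  finally show ?thesis .
qed

theorem lemma3:
  fixes n :: nat and p :: real and pi0 :: "nat \<Rightarrow> real"
  assumes "n \<ge> 2" and "0 < p" and "p < 1"
    and "\<forall>i<n. pi0 i \<ge> 0" and "(\<Sum>i<n. pi0 i) = 1"
  shows "(\<forall>j<n. (\<lambda>h. dist_at n p pi0 h j) \<longlonglongrightarrow> 1 / real n)
       \<and> (\<forall>h. (\<Sum>j<n. \<bar>dist_at n p pi0 h j - 1 / real n\<bar>)
               \<le> sqrt (real n) * ((1 - p) / sqrt (1 + p\<^sup>2 - 2 * p * cos (2 * pi / real n))) ^ h)"
proof -
  have n2: "n \<ge> 2" and p0: "0 < p" and p1: "p < 1" using assms by auto
  have n0: "n > 0" using n2 by simp
  define x where "x h j = dist_at n p pi0 h j - 1 / real n" for h j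
  define X where "X h k = DFT n (\<lambda>j. complex_of_real (x h j)) k" for h k
  define D where "D = 1 + p\<^sup>2 - 2 * p * cos (2 * pi / real n)"
  define \<rho> where "\<rho> = (1 - p) / sqrt D"
  have c1: "cos (2 * pi / real n) < 1"
  proof -
    have "real n \<ge> 2" using n2 by simp
    then have "2 * pi / real n \<le> pi" by (simp add: field_simps)
    moreover have "0 < 2 * pi / real n" using n0 by simp
    ultimately have "cos (2 * pi / real n) < cos 0"
      by (intro cos_monotone_0_pi) auto
    then show ?thesis by simp
  qed
  have D1: "D > (1 - p)\<^sup>2"
  proof -
    have "D - (1 - p)\<^sup>2 = 2 * p * (1 - cos (2 * pi / real n))"
      unfolding D_def by (simp add: power2_eq_square algebra_simps)
    also have "\<dots> > 0" using p0 c1 by simp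
    finally show ?thesis by simp
  qed
  have Dpos: "D > 0" using D1 zero_le_power2[of "1 - p"] by linarith
  have rho0: "\<rho> \<ge> 0" using p1 Dpos by (simp add: \<rho>_def)
  have rho1: "\<rho> < 1"
  proof -
    have "1 - p < sqrt D" using D1 by (intro real_less_rsqrt) simp
    then show ?thesis using Dpos by (simp add: \<rho>_def)
  qed
  have rho2: "\<rho>\<^sup>2 = (1 - p)\<^sup>2 / D" using Dpos by (simp add: \<rho>_def power_divide)
  have xrec: "x (Suc h) ((j+1) mod n) - p * x (Suc h) j = (1 - p) * x h j" if "j < n" for h j
    unfolding x_def by (rule alg2[OF dist_rec[OF n2 p0 p1 that]])
  have Xrec: "(1 - complex_of_real p * om n ^ k) * X (Suc h) k = complex_of_real (1 - p) * om n ^ k * X h k" for h k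
  proof -
    have "(\<Sum>j<n. complex_of_real (x (Suc h) ((j+1) mod n)) * om n ^ (j * k)) - complex_of_real p * X (Suc h) k
        = (\<Sum>j<n. complex_of_real (x (Suc h) ((j+1) mod n) - p * x (Suc h) j) * om n ^ (j * k))"
      unfolding X_def DFT_def by (simp add: sum_distrib_left sum_subtractf algebra_simps)
    also have "\<dots> = (\<Sum>j<n. complex_of_real ((1 - p) * x h j) * om n ^ (j * k))"
    proof (rule sum.cong)
      fix j assume "j \<in> {..<n}"
      then have "x (Suc h) ((j+1) mod n) - p * x (Suc h) j = (1 - p) * x h j" by (intro xrec) simp
      then show "complex_of_real (x (Suc h) ((j+1) mod n) - p * x (Suc h) j) * om n ^ (j * k)
          = complex_of_real ((1 - p) * x h j) * om n ^ (j * k)" by (simp only:)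
    qed simp
    also have "\<dots> = complex_of_real (1 - p) * X h k"
      unfolding X_def DFT_def by (simp add: sum_distrib_left algebra_simps)
    finally have e: "(\<Sum>j<n. complex_of_real (x (Suc h) ((j+1) mod n)) * om n ^ (j * k)) - complex_of_real p * X (Suc h) k
        = complex_of_real (1 - p) * X h k" .
    have "om n ^ k * (\<Sum>j<n. complex_of_real (x (Suc h) ((j+1) mod n)) * om n ^ (j * k)) = X (Suc h) k"
      unfolding X_def by (rule DFT_shift[OF n0])
    then have "X (Suc h) k - complex_of_real p * om n ^ k * X (Suc h) k = om n ^ k * (complex_of_real (1 - p) * X h k)"
      using arg_cong[OF e, of "\<lambda>z. om n ^ k * z"] by (simp add: algebra_simps)
    then show ?thesis by (simp add: algebra_simps)
  qed
  have X0: "X h 0 = 0" for h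
  proof (induction h)
    case 0
    have "X 0 0 = complex_of_real (\<Sum>j<n. x 0 j)" unfolding X_def DFT_def by simp
    also have "(\<Sum>j<n. x 0 j) = (\<Sum>j<n. pi0 j) - real n * (1 / real n)"
      unfolding x_def by (simp add: sum_subtractf)
    also have "\<dots> = 0" using assms(5) n0 by simp
    finally show ?case by simp
  next
    case (Suc h)
    have "(1 - complex_of_real p) * X (Suc h) 0 = 0" using Xrec[of 0 h] Suc by simp
    moreover have "1 - complex_of_real p \<noteq> 0" using p1
      by (metis eq_iff_diff_eq_0 less_irrefl of_real_1 of_real_eq_iff)
    ultimately show ?case by simp
  qed
  have Xle: "(cmod (X (Suc h) k))\<^sup>2 \<le> \<rho>\<^sup>2 * (cmod (X h k))\<^sup>2" if k: "k < n" for h k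
  proof (cases "k = 0")
    case True then show ?thesis using X0 by simp
  next
    case False
    have nm: "(cmod (1 - complex_of_real p * om n ^ k))\<^sup>2 \<ge> D"
      unfolding norm_one_minus D_def using cos_le[OF n2 _ k] False p0
      by (simp add: mult_left_mono)
    have "cmod (1 - complex_of_real p * om n ^ k) * cmod (X (Suc h) k) = (1 - p) * cmod (X h k)"
    proof -
      have "cmod (complex_of_real (1 - p)) = 1 - p" using p1 by (simp only: norm_of_real abs_of_pos diff_gt_0_iff_gt)
      then have cp: "cmod (1 - complex_of_real p) = 1 - p" by (simp only: of_real_diff of_real_1)
      show ?thesis using arg_cong[OF Xrec[of k h], of cmod] p1 cp unfolding norm_mult by simp
    qed
    then have eq: "(cmod (1 - complex_of_real p * om n ^ k))\<^sup>2 * (cmod (X (Suc h) k))\<^sup>2 = (1 - p)\<^sup>2 * (cmod (X h k))\<^sup>2"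
      by (metis power_mult_distrib)
    have "D * (cmod (X (Suc h) k))\<^sup>2 \<le> (1 - p)\<^sup>2 * (cmod (X h k))\<^sup>2"
      using mult_right_mono[OF nm, of "(cmod (X (Suc h) k))\<^sup>2"] eq by simp
    then show ?thesis using Dpos unfolding rho2 by (simp add: field_simps)
  qed
  define S where "S h = (\<Sum>j<n. (x h j)\<^sup>2)" for h
  have SX: "(\<Sum>k<n. (cmod (X h k))\<^sup>2) = real n * S h" for h
    unfolding X_def S_def parseval by simp
  have Sstep: "S (Suc h) \<le> \<rho>\<^sup>2 * S h" for h
  proof -
    have "real n * S (Suc h) \<le> (\<Sum>k<n. \<rho>\<^sup>2 * (cmod (X h k))\<^sup>2)"
      unfolding SX[symmetric] by (rule sum_mono) (simp add: Xle)
    also have "\<dots> = real n * (\<rho>\<^sup>2 * S h)" by (simp add: sum_distrib_left[symmetric] SX)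
    finally show ?thesis using n0 by simp
  qed
  have S0: "S 0 \<le> 1"
  proof -
    have le1: "pi0 j \<le> 1" if "j < n" for j
    proof -
      have "pi0 j \<le> (\<Sum>i<n. pi0 i)" using that assms(4) by (intro member_le_sum) auto
      then show ?thesis using assms(5) by simp
    qed
    have "S 0 = (\<Sum>j<n. (pi0 j)\<^sup>2 - 2 / real n * pi0 j + (1 / real n)\<^sup>2)"
      unfolding S_def x_def by (intro sum.cong refl) (simp add: power2_diff algebra_simps)
    also have "\<dots> = (\<Sum>j<n. (pi0 j)\<^sup>2) - 2 / real n * (\<Sum>j<n. pi0 j) + real n * (1 / real n)\<^sup>2"
      by (simp add: sum.distrib sum_subtractf sum_distrib_left)
    also have "\<dots> = (\<Sum>j<n. (pi0 j)\<^sup>2) - 1 / real n"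
      using assms(5) n0 by (simp add: power2_eq_square field_simps)
    also have "(\<Sum>j<n. (pi0 j)\<^sup>2) \<le> (\<Sum>j<n. pi0 j)"
    proof (rule sum_mono)
      fix j assume "j \<in> {..<n}"
      then have "0 \<le> pi0 j" "pi0 j \<le> 1" using assms(4) le1 by auto
      then show "(pi0 j)\<^sup>2 \<le> pi0 j" by (simp add: power2_eq_square mult_left_le)
    qed
    finally have "S 0 \<le> (\<Sum>j<n. pi0 j) - 1 / real n" by simp
    moreover have "0 \<le> 1 / real n" by simp
    ultimately show ?thesis using assms(5) by linarith
  qed
  have Sh: "S h \<le> (\<rho>\<^sup>2) ^ h" for h
  proof (induction h)
    case 0 then show ?case using S0 by simp
  next
    case (Suc h)
    have "S (Suc h) \<le> \<rho>\<^sup>2 * S h" by (rule Sstep)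
    also have "\<dots> \<le> \<rho>\<^sup>2 * (\<rho>\<^sup>2) ^ h" using Suc by (intro mult_left_mono) simp_all
    finally show ?case by simp
  qed
  have L1: "(\<Sum>j<n. \<bar>x h j\<bar>) \<le> sqrt (real n) * \<rho> ^ h" for h
  proof -
    have "(\<Sum>j<n. \<bar>x h j\<bar>)\<^sup>2 \<le> (\<Sum>j<n. \<bar>x h j\<bar>\<^sup>2) * card {..<n}"
      by (rule sum_squared_le_sum_of_squares)
    also have "\<dots> = S h * real n" unfolding S_def by simp
    also have "\<dots> \<le> (\<rho> ^ h)\<^sup>2 * real n"
      using Sh[of h] by (intro mult_right_mono) (simp_all add: power_mult[symmetric] power_mult_distrib mult.commute)
    finally have "(\<Sum>j<n. \<bar>x h j\<bar>) \<le> sqrt ((\<rho> ^ h)\<^sup>2 * real n)" by (rule real_le_rsqrt)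
    also have "\<dots> = sqrt (real n) * \<rho> ^ h" using rho0 by (simp add: real_sqrt_mult mult.commute)
    finally show ?thesis .
  qed
  have conv: "(\<lambda>h. dist_at n p pi0 h j) \<longlonglongrightarrow> 1 / real n" if j: "j < n" for j
  proof -
    have "(\<lambda>h. x h j) \<longlonglongrightarrow> 0"
    proof (rule Lim_null_comparison)
      show "\<forall>\<^sub>F h in sequentially. norm (x h j) \<le> sqrt (real n) * \<rho> ^ h"
      proof (rule always_eventually, rule allI)
        fix h
        have "\<bar>x h j\<bar> \<le> (\<Sum>j<n. \<bar>x h j\<bar>)" using j by (intro member_le_sum) auto
        then show "norm (x h j) \<le> sqrt (real n) * \<rho> ^ h" using L1[of h] by simp
      qed
      show "(\<lambda>h. sqrt (real n) * \<rho> ^ h) \<longlonglongrightarrow> 0"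
        using rho0 rho1 by (intro tendsto_mult_right_zero LIMSEQ_power_zero) simp
    qed
    then show ?thesis unfolding x_def by (simp add: LIM_zero_iff)
  qed
  show ?thesis
    using conv L1 unfolding x_def \<rho>_def D_def by blast
qed

end
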